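(* Consider the queueing system in the context under MaxWeight with a diagonal matrix $\Delta$ with positive diagonal entries, in overload ($\rho\notin\mathcal{P}$), and let $\eta=\lim_{t\to\infty}X(t)/t$. Then $$\eta=\Big[\rho-\sum_{m=1}^N\alpha_mS_m\Big]^+$$ for some $\alpha_m\ge0$ with $\sum_m\alpha_m=1$. Furthermore, $\alpha_m>0$ implies $\eta\in C_{S_m}$, where $C_S=\{x\in\mathbb{R}^Q:\langle S,\Delta x\rangle=\max_{S'\in\mathcal{S}}\langle S',\Delta x\rangle\}$.
   Context: Model: $Q$ queues, finite set $\mathcal{S}=\{S_1,\dots,S_N\}\subset\mathbb{R}^Q_{\ge0}$, discrete time. Arrivals $A(t)$ with $0\le A_q(t)\le\bar A_q<\infty$ and $\rho_q=\lim_{t\to\infty}\frac1t\sum_{s=0}^{t-1}A_q(s)\in(0,\infty)$. Departures $D_q(t)=\min\{S_q(t),X_q(t)\}$, $X(t+1)=X(t)+A(t)-D(t)$, $X(0)=0$, with $S(t)\in\arg\max_{S\in\mathcal{S}}\langle S,\Delta X(t)\rangle$. $[x]^+$ is the componentwise positive part. Stability region $\mathcal{P}=\{r\in\mathbb{R}^Q_{\ge0}: r\le\sum_n\alpha_nS_n\text{ for some }\alpha_n\ge0,\sum_n\alpha_n=1\}$. (Under these assumptions $\lim_t X(t)/t$ exists.) *)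

theory Defs
  imports "HOL-Analysis.Analysis"
begin

definition pos_part :: "real^'q \<Rightarrow> real^'q" where
  "pos_part x = (\<chi> q. max 0 (x $ q))"

definition stab_region :: "(real^'q) set \<Rightarrow> (real^'q) set" where
  "stab_region Sch = {r. (\<forall>q. 0 \<le> r $ q) \<and>
     (\<exists>\<alpha>::real^'q \<Rightarrow> real. (\<forall>S\<in>Sch. 0 \<le> \<alpha> S) \<and> (\<Sum>S\<in>Sch. \<alpha> S) = 1 \<and>
        (\<forall>q. r $ q \<le> (\<Sum>S\<in>Sch. \<alpha> S *\<^sub>R S) $ q))}"

definition cone_C :: "real^'q^'q \<Rightarrow> (real^'q) set \<Rightarrow> real^'q \<Rightarrow> (real^'q) set" where
  "cone_C \<Delta> Sch S = {x. S \<bullet> (\<Delta> *v x) = Max ((\<lambda>S'. S' \<bullet> (\<Delta> *v x)) ` Sch)}"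

end

theory Submission
  imports Defs
begin

lemma subseq_family:
  fixes g :: "'a \<Rightarrow> nat \<Rightarrow> real"
  assumes "finite F" and bnd: "\<And>S n. \<bar>g S n\<bar> \<le> 1"
  shows "\<exists>r. strict_mono r \<and> (\<forall>S\<in>F. \<exists>l. (\<lambda>n. g S (r n)) \<longlonglongrightarrow> l)"
  using assms(1)
proof (induction F rule: finite_induct)
  case empty
  then show ?case by (rule exI[of _ id]) (simp add: strict_mono_def)
next
  case (insert x F)
  then obtain r where r: "strict_mono r" "\<forall>S\<in>F. \<exists>l. (\<lambda>n. g S (r n)) \<longlonglongrightarrow> l" by blast
  have "bounded (range (\<lambda>n. g x (r n)))"
    using bnd by (intro boundedI[of _ 1]) auto
  then obtain l r' where r': "strict_mono r'" "((\<lambda>n. g x (r n)) \<circ> r') \<longlonglongrightarrow> l"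
    using bounded_imp_convergent_subsequence by blast
  have "strict_mono (r \<circ> r')" using r r' strict_mono_o by blast
  moreover have "\<forall>S\<in>insert x F. \<exists>l. (\<lambda>n. g S ((r \<circ> r') n)) \<longlonglongrightarrow> l"
  proof
    fix S assume "S \<in> insert x F"
    then show "\<exists>l. (\<lambda>n. g S ((r \<circ> r') n)) \<longlonglongrightarrow> l"
    proof
      assume "S = x" then show ?thesis using r' by (auto simp: o_def)
    next
      assume "S \<in> F"
      then obtain l where "(\<lambda>n. g S (r n)) \<longlonglongrightarrow> l" using r by blast
      from LIMSEQ_subseq_LIMSEQ[OF this r'(1)] show ?thesis by (auto simp: o_def)
    qed
  qed
  ultimately show ?case by blast
qed

lemma avg_eventually_zero:
  fixes f :: "nat \<Rightarrow> real"
  assumes "\<forall>s\<ge>T. f s = 0"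
  shows "(\<lambda>t. (1/real t) * (\<Sum>s<t. f s)) \<longlonglongrightarrow> 0"
proof -
  have "\<forall>\<^sub>F t in sequentially. (\<Sum>s<T. f s) / real t = (1/real t) * (\<Sum>s<t. f s)"
  proof (rule eventually_sequentiallyI[of T])
    fix t assume "T \<le> t"
    then have "(\<Sum>s<t. f s) = (\<Sum>s<T. f s) + (\<Sum>s\<in>{T..<t}. f s)"
      using sum.atLeastLessThan_concat[of 0 T t f] by (simp add: atLeast0LessThan)
    also have "(\<Sum>s\<in>{T..<t}. f s) = 0" using assms by simp
    finally show "(\<Sum>s<T. f s) / real t = (1/real t) * (\<Sum>s<t. f s)" by simp
  qed
  from Lim_transform_eventually[OF lim_const_over_n this] show ?thesis by simp
qed

theorem lemma8:
  fixes Sch :: "(real^'q) set"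
    and \<Delta> :: "real^'q^'q"
    and A X D Ssel :: "nat \<Rightarrow> real^'q"
    and Abar \<rho> \<eta> :: "real^'q"
  assumes Sch_fin: "finite Sch" and Sch_ne: "Sch \<noteq> {}"
    and Sch_nonneg: "\<forall>S\<in>Sch. \<forall>q. 0 \<le> S $ q"
    and Delta_diag: "\<forall>i j. i \<noteq> j \<longrightarrow> \<Delta> $ i $ j = 0"
    and Delta_pos: "\<forall>i. 0 < \<Delta> $ i $ i"
    and A_bnd: "\<forall>t q. 0 \<le> A t $ q \<and> A t $ q \<le> Abar $ q"
    and rho_lim: "(\<lambda>t. (1 / real t) *\<^sub>R (\<Sum>s<t. A s)) \<longlonglongrightarrow> \<rho>"
    and rho_pos: "\<forall>q. 0 < \<rho> $ q"
    and sched: "\<forall>t. Ssel t \<in> Sch \<and>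
                  (\<forall>S'\<in>Sch. S' \<bullet> (\<Delta> *v X t) \<le> Ssel t \<bullet> (\<Delta> *v X t))"
    and dep: "\<forall>t q. D t $ q = min (Ssel t $ q) (X t $ q)"
    and X0: "X 0 = 0"
    and Xstep: "\<forall>t. X (Suc t) = X t + A t - D t"
    and overload: "\<rho> \<notin> stab_region Sch"
    and eta_lim: "(\<lambda>t. (1 / real t) *\<^sub>R X t) \<longlonglongrightarrow> \<eta>"
  shows "\<exists>\<alpha>::real^'q \<Rightarrow> real. (\<forall>S\<in>Sch. 0 \<le> \<alpha> S) \<and> (\<Sum>S\<in>Sch. \<alpha> S) = 1 \<and>
           \<eta> = pos_part (\<rho> - (\<Sum>S\<in>Sch. \<alpha> S *\<^sub>R S)) \<and>
           (\<forall>S\<in>Sch. 0 < \<alpha> S \<longrightarrow> \<eta> \<in> cone_C \<Delta> Sch S)"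
proof -
  have Xsum: "X t = (\<Sum>s<t. A s - D s)" for t
    by (induction t) (use X0 Xstep in \<open>auto simp: algebra_simps\<close>)
  have Xnn: "0 \<le> X t $ q" for t q
  proof (induction t)
    case 0 then show ?case using X0 by simp
  next
    case (Suc t)
    have "X (Suc t) $ q = X t $ q + A t $ q - min (Ssel t $ q) (X t $ q)"
      using Xstep dep by simp
    moreover have "0 \<le> A t $ q" using A_bnd by blast
    ultimately show ?case using Suc by linarith
  qed
  have Dle: "D t $ q \<le> Ssel t $ q" for t q using dep by simp
  have avgD: "(\<lambda>t. (1/real t) *\<^sub>R (\<Sum>s<t. D s)) \<longlonglongrightarrow> \<rho> - \<eta>"
  proof -
    have eq: "(1/real t) *\<^sub>R (\<Sum>s<t. D s) = (1/real t) *\<^sub>R (\<Sum>s<t. A s) - (1/real t) *\<^sub>R X t" for t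
      by (simp add: Xsum sum_subtractf scaleR_diff_right)
    show ?thesis unfolding eq by (rule tendsto_diff[OF rho_lim eta_lim])
  qed
  define beta where "beta S t = (1/real t) * (\<Sum>s<t. if Ssel s = S then 1 else (0::real))" for S t
  have beta_nn: "0 \<le> beta S t" for S t unfolding beta_def by (auto intro!: sum_nonneg divide_nonneg_nonneg)
  have beta_le: "beta S t \<le> 1" for S t
  proof -
    have "(\<Sum>s<t. if Ssel s = S then 1 else (0::real)) \<le> (\<Sum>s<t. 1)" by (rule sum_mono) simp
    then have "(\<Sum>s<t. if Ssel s = S then 1 else (0::real)) \<le> real t" by simp
    then show ?thesis unfolding beta_def by (cases "t = 0") (auto simp: field_simps)
  qed
  have "\<bar>beta S t\<bar> \<le> 1" for S t using beta_nn beta_le by (simp add: abs_le_iff)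
  from subseq_family[of Sch beta, OF Sch_fin this] obtain r where
    r: "strict_mono r" "\<forall>S\<in>Sch. \<exists>l. (\<lambda>n. beta S (r n)) \<longlonglongrightarrow> l" by blast
  define \<alpha> where "\<alpha> S = lim (\<lambda>n. beta S (r n))" for S
  have alim: "(\<lambda>n. beta S (r n)) \<longlonglongrightarrow> \<alpha> S" if "S \<in> Sch" for S
    using r(2) that unfolding \<alpha>_def by (metis convergentI convergent_LIMSEQ_iff)
  have alpha_nn: "\<forall>S\<in>Sch. 0 \<le> \<alpha> S"
    using alim beta_nn by (meson LIMSEQ_le_const)
  have ident: "(\<Sum>S\<in>Sch. beta S t *\<^sub>R S) = (1/real t) *\<^sub>R (\<Sum>s<t. Ssel s)" for t
  proof -
    have "(\<Sum>S\<in>Sch. beta S t *\<^sub>R S) = (\<Sum>S\<in>Sch. (1/real t) *\<^sub>R (\<Sum>s<t. if Ssel s = S then Ssel s else 0))"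
    proof (intro sum.cong refl)
      fix x
      have e: "(\<Sum>s<t. if Ssel s = x then 1 else (0::real)) *\<^sub>R x = (\<Sum>s<t. if Ssel s = x then Ssel s else 0)"
        by (auto simp: scaleR_sum_left intro!: sum.cong)
      show "beta x t *\<^sub>R x = (1/real t) *\<^sub>R (\<Sum>s<t. if Ssel s = x then Ssel s else 0)"
        unfolding beta_def e[symmetric] by simp
    qed
    also have "\<dots> = (1/real t) *\<^sub>R (\<Sum>s<t. \<Sum>S\<in>Sch. if Ssel s = S then Ssel s else 0)"
      by (simp add: scaleR_sum_right[symmetric] sum.swap[of _ Sch])
    also have "\<dots> = (1/real t) *\<^sub>R (\<Sum>s<t. Ssel s)"
      using Sch_fin sched by (simp add: sum.delta)
    finally show ?thesis .
  qed
  have sumbeta: "(\<Sum>S\<in>Sch. beta S t) = 1" if "t > 0" for t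
  proof -
    have "(\<Sum>S\<in>Sch. beta S t) = (1/real t) * (\<Sum>s<t. \<Sum>S\<in>Sch. if Ssel s = S then 1 else (0::real))"
      unfolding beta_def by (simp add: sum_distrib_left[symmetric] sum.swap[of _ Sch] sum_divide_distrib[symmetric])
    also have "\<dots> = (1/real t) * (\<Sum>s<t. 1)"
      using Sch_fin sched by (simp add: sum.delta)
    also have "\<dots> = 1" using that by simp
    finally show ?thesis .
  qed
  define \<sigma> where "\<sigma> = (\<Sum>S\<in>Sch. \<alpha> S *\<^sub>R S)"
  have avgS: "(\<lambda>n. (1/real (r n)) *\<^sub>R (\<Sum>s<r n. Ssel s)) \<longlonglongrightarrow> \<sigma>"
  proof -
    have "(\<lambda>n. \<Sum>S\<in>Sch. beta S (r n) *\<^sub>R S) \<longlonglongrightarrow> \<sigma>"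
      unfolding \<sigma>_def by (rule tendsto_sum) (auto intro: tendsto_scaleR alim)
    then show ?thesis unfolding ident .
  qed
  have sum1: "(\<Sum>S\<in>Sch. \<alpha> S) = 1"
  proof -
    have l1: "(\<lambda>n. \<Sum>S\<in>Sch. beta S (r n)) \<longlonglongrightarrow> (\<Sum>S\<in>Sch. \<alpha> S)"
      by (rule tendsto_sum) (auto intro: alim)
    have "\<forall>\<^sub>F n in sequentially. (\<Sum>S\<in>Sch. beta S (r n)) = 1"
    proof (rule eventually_sequentiallyI[of 1])
      fix n :: nat assume "1 \<le> n"
      then have "r n > 0" using seq_suble[OF r(1), of n] by linarith
      then show "(\<Sum>S\<in>Sch. beta S (r n)) = 1" by (rule sumbeta)
    qed
    then have "(\<lambda>n. \<Sum>S\<in>Sch. beta S (r n)) \<longlonglongrightarrow> 1"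
      by (rule tendsto_eventually)
    from LIMSEQ_unique[OF l1 this] show ?thesis .
  qed
  have comp: "\<eta> $ q = max 0 ((\<rho> - \<sigma>) $ q)" for q
  proof -
    have hD: "(\<lambda>n. (1/real (r n)) * (\<Sum>s<r n. D s $ q)) \<longlonglongrightarrow> \<rho>$q - \<eta>$q"
      using tendsto_vec_nth[OF LIMSEQ_subseq_LIMSEQ[OF avgD r(1)], of q] by (simp add: o_def)
    have hS: "(\<lambda>n. (1/real (r n)) * (\<Sum>s<r n. Ssel s $ q)) \<longlonglongrightarrow> \<sigma>$q"
      using tendsto_vec_nth[OF avgS, of q] by simp
    have etaq: "(\<lambda>t. (1/real t) * X t $ q) \<longlonglongrightarrow> \<eta>$q"
      using tendsto_vec_nth[OF eta_lim, of q] by simp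
    have le1: "\<rho>$q - \<eta>$q \<le> \<sigma>$q"
    proof (rule LIMSEQ_le[OF hD hS], intro exI allI impI)
      fix n
      show "(1/real (r n)) * (\<Sum>s<r n. D s $ q) \<le> (1/real (r n)) * (\<Sum>s<r n. Ssel s $ q)"
        by (intro mult_left_mono sum_mono Dle) auto
    qed
    have nn: "0 \<le> \<eta>$q"
      by (rule LIMSEQ_le_const[OF etaq]) (use Xnn in \<open>auto intro!: divide_nonneg_nonneg\<close>)
    show ?thesis
    proof (cases "\<eta>$q > 0")
      case False
      then show ?thesis using nn le1 by simp
    next
      case True
      define B where "B = (\<Sum>S\<in>Sch. S $ q)"
      have SB: "Ssel s $ q \<le> B" for s
        unfolding B_def using sched Sch_nonneg Sch_fin
        by (intro member_le_sum[of "Ssel s" Sch "\<lambda>S. S $ q"]) auto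
      have "\<forall>\<^sub>F t in sequentially. \<eta>$q/2 < (1/real t) * X t $ q"
        using order_tendstoD(1)[OF etaq, of "\<eta>$q/2"] True by simp
      then obtain N1 where N1: "\<forall>t\<ge>N1. \<eta>$q/2 < (1/real t) * X t $ q"
        by (auto simp: eventually_sequentially)
      obtain N2 where N2: "B/(\<eta>$q/2) \<le> real N2" using real_arch_simple by blast
      define T where "T = max (max N1 N2) 1"
      have XT: "Ssel s $ q - D s $ q = 0" if "s \<ge> T" for s
      proof -
        have s0: "real s > 0" using that T_def by simp
        have a: "\<eta>$q/2 < (1/real s) * X s $ q" using N1 that T_def by simp
        have b: "real s * (\<eta>$q/2) < X s $ q"
          using a s0 by (simp add: field_simps)
        have c: "B \<le> real s * (\<eta>$q/2)"
        proof -
          have "B/(\<eta>$q/2) \<le> real s" using N2 that T_def by simp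
          then show ?thesis using True by (simp add: field_simps)
        qed
        have "Ssel s $ q \<le> X s $ q" using SB[of s] b c by linarith
        then show ?thesis using dep by simp
      qed
      have z: "(\<lambda>t. (1/real t) * (\<Sum>s<t. Ssel s $ q - D s $ q)) \<longlonglongrightarrow> 0"
        by (rule avg_eventually_zero) (use XT in blast)
      have z2: "(\<lambda>n. (1/real (r n)) * (\<Sum>s<r n. Ssel s $ q - D s $ q)) \<longlonglongrightarrow> 0"
        using LIMSEQ_subseq_LIMSEQ[OF z r(1)] by (simp add: o_def)
      have "(\<lambda>n. (1/real (r n)) * (\<Sum>s<r n. Ssel s $ q - D s $ q)) \<longlonglongrightarrow> \<sigma>$q - (\<rho>$q - \<eta>$q)"
        using tendsto_diff[OF hS hD] by (simp add: sum_subtractf right_diff_distrib)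
      from LIMSEQ_unique[OF this z2] have "\<sigma>$q = \<rho>$q - \<eta>$q" by simp
      then show ?thesis using True by simp
    qed
  qed
  have eta_eq: "\<eta> = pos_part (\<rho> - \<sigma>)"
    unfolding pos_part_def vec_eq_iff using comp by simp
  have cone: "\<eta> \<in> cone_C \<Delta> Sch S" if SS: "S \<in> Sch" and apos: "0 < \<alpha> S" for S
  proof (rule ccontr)
    assume nc: "\<eta> \<notin> cone_C \<Delta> Sch S"
    define f where "f S' = S' \<bullet> (\<Delta> *v \<eta>)" for S'
    have fin: "finite (f ` Sch)" using Sch_fin by simp
    have ne: "f ` Sch \<noteq> {}" using Sch_ne by simp
    have "f S \<le> Max (f ` Sch)" using fin SS by simp
    moreover have "f S \<noteq> Max (f ` Sch)" using nc unfolding cone_C_def f_def by simp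
    ultimately have lt: "f S < Max (f ` Sch)" by simp
    obtain S' where S': "S' \<in> Sch" "f S' = Max (f ` Sch)"
      using Max_in[OF fin ne] by auto
    have dpos: "0 < (S' - S) \<bullet> (\<Delta> *v \<eta>)" using lt S' unfolding f_def by (simp add: inner_diff_left)
    have tl: "(\<lambda>t. (S' - S) \<bullet> (\<Delta> *v ((1/real t) *\<^sub>R X t))) \<longlonglongrightarrow> (S' - S) \<bullet> (\<Delta> *v \<eta>)"
      by (intro tendsto_inner tendsto_const bounded_linear.tendsto[OF matrix_vector_mul_bounded_linear] eta_lim)
    then have "\<forall>\<^sub>F t in sequentially. 0 < (S' - S) \<bullet> (\<Delta> *v ((1/real t) *\<^sub>R X t))"
      using order_tendstoD(1)[OF tl dpos] by simp
    then obtain T where T: "\<forall>t\<ge>T. 0 < (S' - S) \<bullet> (\<Delta> *v ((1/real t) *\<^sub>R X t))"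
      by (auto simp: eventually_sequentially)
    have ne0: "(if Ssel s = S then 1 else (0::real)) = 0" if "s \<ge> T" for s
    proof -
      have "0 < (S' - S) \<bullet> (\<Delta> *v ((1/real s) *\<^sub>R X s))" using T that by simp
      also have "(\<Delta> *v ((1/real s) *\<^sub>R X s)) = (1/real s) *\<^sub>R (\<Delta> *v X s)"
        by (simp add: matrix_vector_mult_scaleR)
      finally have "0 < (1/real s) * ((S' - S) \<bullet> (\<Delta> *v X s))" by simp
      then have "0 < (S' - S) \<bullet> (\<Delta> *v X s)"
        by (auto simp: zero_less_mult_iff zero_less_divide_iff)
      then have "S \<bullet> (\<Delta> *v X s) < S' \<bullet> (\<Delta> *v X s)" by (simp add: inner_diff_left)
      moreover have "S' \<bullet> (\<Delta> *v X s) \<le> Ssel s \<bullet> (\<Delta> *v X s)" using sched S'(1) by blast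
      ultimately have "Ssel s \<noteq> S" by auto
      then show ?thesis by simp
    qed
    have "(\<lambda>t. beta S t) \<longlonglongrightarrow> 0"
      unfolding beta_def by (rule avg_eventually_zero) (use ne0 in blast)
    from LIMSEQ_subseq_LIMSEQ[OF this r(1)] have "(\<lambda>n. beta S (r n)) \<longlonglongrightarrow> 0" by (simp add: o_def)
    from LIMSEQ_unique[OF alim[OF SS] this] apos show False by simp
  qed
  show ?thesis
    by (rule exI[of _ \<alpha>]) (use alpha_nn sum1 eta_eq cone \<sigma>_def in blast)
qed

end
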